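(* For every $\omega$-elementary wqo $A$, $\mathbf{h}(A)=\omega$.
   Context: A wqo is a quasi-order in which every infinite sequence has $i<j$ with $x_i\le x_j$. $\mathbf{h}(A)$ is the rank of the root of the well-founded tree of finite strictly decreasing sequences of $A$ (root: empty sequence, children: one-element extensions; rank $r(s)=\sup\{r(t)+1: t\text{ child of } s\}$). $\omega$-elementary wqos are given by the grammar $A::=\omega\mid A\sqcup B\mid A\times B\mid A^{<\omega}\mid\mathsf{M}^\diamond(A)\mid\mathcal{P}_f(A)$, where $\omega$ is the wqo $(\omega,\le)$, $\sqcup$ is disjoint union ordered by $\le_A\cup\le_B$, $\times$ is Cartesian product with componentwise order, $A^{<\omega}$ is finite words with subword embedding ($u_1\cdots u_n\le v_1\cdots v_m$ iff there are $f_1<\dots<f_n$ with $u_i\le v_{f_i}$), $\mathsf{M}^\diamond(A)$ is finite multisets with multiset embedding, and $\mathcal{P}_f(A)$ is finite subsets with Hoare embedding ($S\le_H S'$ iff $\forall a\in S\,\exists b\in S'\,a\le b$). *)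

theory Defs
  imports Main "HOL-Library.Multiset" "HOL-Library.FSet" "HOL-Library.Sublist"
begin

text \<open>A universe of values in which all omega-elementary wqos live.\<close>
datatype val = VN nat | VL val | VR val | VP val val | VW "val list"
  | VM "val multiset" | VF "val fset"

text \<open>Syntax of omega-elementary wqos.\<close>
datatype wexp = Omega | DSum wexp wexp | Prod wexp wexp | Words wexp
  | MSets wexp | Pfin wexp

fun carrier :: "wexp \<Rightarrow> val set" where
  "carrier Omega = range VN"
| "carrier (DSum A B) = VL ` carrier A \<union> VR ` carrier B"
| "carrier (Prod A B) = {VP x y | x y. x \<in> carrier A \<and> y \<in> carrier B}"
| "carrier (Words A) = {VW xs | xs. set xs \<subseteq> carrier A}"
| "carrier (MSets A) = {VM m | m. set_mset m \<subseteq> carrier A}"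
| "carrier (Pfin A) = {VF s | s. fset s \<subseteq> carrier A}"

text \<open>The quasi-order of each wqo (meaningful on its carrier).\<close>
primrec leq :: "wexp \<Rightarrow> val \<Rightarrow> val \<Rightarrow> bool" where
  "leq Omega x y = (case (x, y) of (VN m, VN n) \<Rightarrow> m \<le> n | _ \<Rightarrow> False)"
| "leq (DSum A B) x y = (case (x, y) of
       (VL x', VL y') \<Rightarrow> leq A x' y'
     | (VR x', VR y') \<Rightarrow> leq B x' y'
     | _ \<Rightarrow> False)"
| "leq (Prod A B) x y = (case (x, y) of
       (VP x1 x2, VP y1 y2) \<Rightarrow> leq A x1 y1 \<and> leq B x2 y2
     | _ \<Rightarrow> False)"
| "leq (Words A) x y = (case (x, y) of
       (VW xs, VW ys) \<Rightarrow> list_emb (leq A) xs ys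
     | _ \<Rightarrow> False)"
| "leq (MSets A) x y = (case (x, y) of
       (VM m, VM m') \<Rightarrow>
         (\<exists>xs ys. mset xs = m \<and> mset ys \<subseteq># m' \<and> list_all2 (leq A) xs ys)
     | _ \<Rightarrow> False)"
| "leq (Pfin A) x y = (case (x, y) of
       (VF s, VF s') \<Rightarrow> (\<forall>a. a |\<in>| s \<longrightarrow> (\<exists>b. b |\<in>| s' \<and> leq A a b))
     | _ \<Rightarrow> False)"

definition less :: "wexp \<Rightarrow> val \<Rightarrow> val \<Rightarrow> bool" where
  "less A x y \<longleftrightarrow> leq A x y \<and> \<not> leq A y x"

definition dec :: "wexp \<Rightarrow> val list \<Rightarrow> bool" where
  "dec A s \<longleftrightarrow> set s \<subseteq> carrier A \<and>
     (\<forall>i. Suc i < length s \<longrightarrow> less A (s ! Suc i) (s ! i))"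

definition child :: "wexp \<Rightarrow> val list \<Rightarrow> val list \<Rightarrow> bool" where
  "child A s t \<longleftrightarrow> dec A t \<and> (\<exists>a. t = s @ [a])"

text \<open>rank_le A s n  means  r(s) \<le> n  (for natural n), following the recursion
  r(s) = sup { r(t)+1 : t child of s }.\<close>
inductive rank_le :: "wexp \<Rightarrow> val list \<Rightarrow> nat \<Rightarrow> bool" for A where
  "(\<And>t. child A s t \<Longrightarrow> \<exists>m<n. rank_le A t m) \<Longrightarrow> rank_le A s n"

text \<open>h(A) = omega: r(root) = sup {r(t)+1 : t child of root} equals omega iff every
  child has finite rank and these ranks are unbounded.\<close>
definition height_is_omega :: "wexp \<Rightarrow> bool" where
  "height_is_omega A \<longleftrightarrow>
     (\<forall>t. child A [] t \<longrightarrow> (\<exists>n. rank_le A t n)) \<and>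
     (\<forall>n. \<exists>t. child A [] t \<and> \<not> rank_le A t n)"

end

theory Submission
  imports Defs
begin

lemma chain_ex: "\<exists>e. (\<forall>k. e k \<in> carrier A) \<and> (\<forall>k. less A (e k) (e (Suc k)))"
proof (induction A)
  case Omega
  show ?case by (rule exI[of _ VN]) (auto simp: less_def)
next
  case (DSum A B)
  then obtain e where "\<forall>k. e k \<in> carrier A" "\<forall>k. less A (e k) (e (Suc k))" by blast
  then show ?case by (intro exI[of _ "\<lambda>k. VL (e k)"]) (auto simp: less_def)
next
  case (Prod A B)
  then obtain e f where "\<forall>k. e k \<in> carrier A" "\<forall>k. less A (e k) (e (Suc k))"
    "\<forall>k. f k \<in> carrier B" "\<forall>k. less B (f k) (f (Suc k))" by blast
  then show ?case by (intro exI[of _ "\<lambda>k. VP (e k) (f k)"]) (auto simp: less_def)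
next
  case (Words A)
  then obtain e where "\<forall>k. e k \<in> carrier A" "\<forall>k. less A (e k) (e (Suc k))" by blast
  then show ?case by (intro exI[of _ "\<lambda>k. VW [e k]"]) (auto simp: less_def)
next
  case (MSets A)
  then obtain e where e: "\<forall>k. e k \<in> carrier A" "\<forall>k. less A (e k) (e (Suc k))" by blast
  have key: "(\<exists>ys. mset ys \<subseteq># {#y#} \<and> list_all2 (leq A) [x] ys) = leq A x y" for x y
  proof
    assume "\<exists>ys. mset ys \<subseteq># {#y#} \<and> list_all2 (leq A) [x] ys"
    then obtain ys where h: "mset ys \<subseteq># {#y#}" "list_all2 (leq A) [x] ys" by blast
    from h(2) obtain z where ys: "ys = [z]" "leq A x z" by (auto simp: list_all2_Cons1)
    with h(1) show "leq A x y" by simp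
  next
    assume "leq A x y" then show "\<exists>ys. mset ys \<subseteq># {#y#} \<and> list_all2 (leq A) [x] ys"
      by (intro exI[of _ "[y]"]) auto
  qed
  from e show ?case by (intro exI[of _ "\<lambda>k. VM {#e k#}"]) (auto simp: less_def key)
next
  case (Pfin A)
  then obtain e where "\<forall>k. e k \<in> carrier A" "\<forall>k. less A (e k) (e (Suc k))" by blast
  then show ?case by (intro exI[of _ "\<lambda>k. VF {|e k|}"]) (auto simp: less_def)
qed

lemma leq_refl: "x \<in> carrier A \<Longrightarrow> leq A x x"
proof (induction A arbitrary: x)
  case (Words A)
  then obtain xs where "x = VW xs" "set xs \<subseteq> carrier A" by auto
  then show ?case using Words.IH by (auto intro: list_emb_refl)
next
  case (MSets A)
  then obtain m where m: "x = VM m" "set_mset m \<subseteq> carrier A" by auto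
  obtain xs where xs: "mset xs = m" using ex_mset by blast
  have "list_all2 (leq A) xs xs" using m xs MSets.IH
    by (auto simp: list_all2_conv_all_nth subset_iff)
  then show ?case using m xs by auto
next
  case (Pfin A)
  then obtain s where s: "x = VF s" "fset s \<subseteq> carrier A" by auto
  have "\<exists>b. b |\<in>| s \<and> leq A a b" if "a |\<in>| s" for a
    using that s Pfin.IH by blast
  then show ?case using s by simp
qed auto

lemma msub_compose:
  "list_all2 R xs' zs \<Longrightarrow> mset ys \<subseteq># mset xs' \<Longrightarrow> \<exists>ws. list_all2 R ys ws \<and> mset ws \<subseteq># mset zs"
proof (induction ys arbitrary: xs' zs)
  case Nil then show ?case by auto
next
  case (Cons y ys)
  have "y \<in> set xs'" using Cons.prems(2) by (metis mset_subset_eqD list.set_intros(1) set_mset_mset)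
  then obtain as bs where xs': "xs' = as @ y # bs" by (meson split_list)
  with Cons.prems(1) obtain us vs where uv: "zs = us @ vs" "list_all2 R as us" "list_all2 R (y#bs) vs"
    by (auto simp: list_all2_append1)
  then obtain z ds where vs: "vs = z # ds" "R y z" "list_all2 R bs ds" by (auto simp: list_all2_Cons1)
  have "mset ys \<subseteq># mset (as @ bs)" using Cons.prems(2) xs' by simp
  moreover have "list_all2 R (as @ bs) (us @ ds)" using uv vs by (simp add: list_all2_appendI)
  ultimately obtain ws where ws: "list_all2 R ys ws" "mset ws \<subseteq># mset (us @ ds)" using Cons.IH by blast
  have "list_all2 R (y # ys) (z # ws)" using ws vs by simp
  moreover have "mset (z # ws) \<subseteq># mset zs" using ws uv vs by simp
  ultimately show ?case by blast
qed

lemma leq_trans: "x \<in> carrier A \<Longrightarrow> y \<in> carrier A \<Longrightarrow> z \<in> carrier A \<Longrightarrow> leq A x y \<Longrightarrow> leq A y z \<Longrightarrow> leq A x z"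
proof (induction A arbitrary: x y z)
  case Omega then show ?case by auto
next
  case (DSum A B)
  have h: "(\<exists>a\<in>carrier A. v = VL a) \<or> (\<exists>a\<in>carrier B. v = VR a)" if "v \<in> carrier (DSum A B)" for v
    using that by auto
  from h[OF DSum.prems(1)] h[OF DSum.prems(2)] h[OF DSum.prems(3)] show ?case
  proof (elim disjE bexE)
    fix a b c assume h: "a \<in> carrier A" "x = VL a" "b \<in> carrier A" "y = VL b" "c \<in> carrier A" "z = VL c"
    then have "leq A a b" "leq A b c" using DSum.prems(4,5) by auto
    then show ?case using h DSum.IH(1)[of a b c] by simp
  next
    fix a b c assume h: "a \<in> carrier B" "x = VR a" "b \<in> carrier B" "y = VR b" "c \<in> carrier B" "z = VR c"
    then have "leq B a b" "leq B b c" using DSum.prems(4,5) by auto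
    then show ?case using h DSum.IH(2)[of a b c] by simp
  qed (use DSum.prems(4,5) in auto)
next
  case (Prod A B)
  from Prod.prems(1-3) obtain a1 a2 b1 b2 c1 c2 where v: "x = VP a1 a2" "y = VP b1 b2" "z = VP c1 c2"
    "a1 \<in> carrier A" "b1 \<in> carrier A" "c1 \<in> carrier A"
    "a2 \<in> carrier B" "b2 \<in> carrier B" "c2 \<in> carrier B" by auto
  then have "leq A a1 b1" "leq A b1 c1" "leq B a2 b2" "leq B b2 c2" using Prod.prems(4,5) by auto
  then show ?case using v Prod.IH(1)[of a1 b1 c1] Prod.IH(2)[of a2 b2 c2] by simp
next
  case (Words A)
  from Words.prems(1-3) obtain xs ys zs where v: "x = VW xs" "y = VW ys" "z = VW zs" "set xs \<subseteq> carrier A" "set ys \<subseteq> carrier A" "set zs \<subseteq> carrier A" by auto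
  then have "list_emb (leq A) xs ys" "list_emb (leq A) ys zs" using Words.prems by auto
  then have "list_emb (leq A) xs zs"
    by (rule list_emb_trans[rotated -2]) (use v in \<open>meson Words.IH subsetD\<close>)
  then show ?case using v by simp
next
  case (MSets A)
  from MSets.prems(1-3) obtain m1 m2 m3 where v: "x = VM m1" "y = VM m2" "z = VM m3" "set_mset m1 \<subseteq> carrier A" "set_mset m2 \<subseteq> carrier A" "set_mset m3 \<subseteq> carrier A" by auto
  from MSets.prems v obtain xs1 ys1 where 1: "mset xs1 = m1" "mset ys1 \<subseteq># m2" "list_all2 (leq A) xs1 ys1" by auto
  from MSets.prems v obtain xs2 ys2 where 2: "mset xs2 = m2" "mset ys2 \<subseteq># m3" "list_all2 (leq A) xs2 ys2" by auto
  obtain ws where ws: "list_all2 (leq A) ys1 ws" "mset ws \<subseteq># mset ys2"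
    using msub_compose[OF 2(3)] 1(2) 2(1) by blast
  have s1: "set xs1 \<subseteq> carrier A" using 1 v by auto
  have s2: "set ys1 \<subseteq> carrier A" using 1 v by (metis set_mset_mono set_mset_mset subset_trans)
  have s3: "set ws \<subseteq> carrier A" using ws 2 v by (metis set_mset_mono set_mset_mset subset_trans subset_mset.order_trans)
  have "list_all2 (leq A) xs1 ws"
  proof (rule list_all2_all_nthI)
    have l: "length xs1 = length ys1" "length ys1 = length ws" using 1(3) ws(1) list_all2_lengthD by auto
    then show "length xs1 = length ws" by simp
    fix i assume i: "i < length xs1"
    have a: "leq A (xs1!i) (ys1!i)" "leq A (ys1!i) (ws!i)"
      using list_all2_nthD[OF 1(3) i] list_all2_nthD[OF ws(1)] i l by auto
    have m: "xs1!i \<in> carrier A" "ys1!i \<in> carrier A" "ws!i \<in> carrier A"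
      using s1 s2 s3 i l nth_mem by (metis subsetD)+
    show "leq A (xs1!i) (ws!i)" by (rule MSets.IH[OF m a])
  qed
  moreover have "mset ws \<subseteq># m3" using ws 2 by (meson subset_mset.order_trans)
  ultimately show ?case using v 1 by auto
next
  case (Pfin A)
  from Pfin.prems(1-3) obtain s1 s2 s3 where v: "x = VF s1" "y = VF s2" "z = VF s3" "fset s1 \<subseteq> carrier A" "fset s2 \<subseteq> carrier A" "fset s3 \<subseteq> carrier A" by auto
  have "\<exists>c. c |\<in>| s3 \<and> leq A a c" if a1: "a |\<in>| s1" for a
  proof -
    obtain b where b: "b |\<in>| s2" "leq A a b" using Pfin.prems v a1 by auto
    obtain c where c: "c |\<in>| s3" "leq A b c" using Pfin.prems v b by auto
    have m: "a \<in> carrier A" "b \<in> carrier A" "c \<in> carrier A" using v b c a1 by auto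
    show ?thesis using Pfin.IH[OF m b(2) c(2)] c(1) by blast
  qed
  then show ?case using v by simp
qed


definition down :: "wexp \<Rightarrow> val \<Rightarrow> val set" where
  "down A x = {y \<in> carrier A. leq A y x}"

lemma finite_down: "x \<in> carrier A \<Longrightarrow> finite (down A x)"
proof (induction A arbitrary: x)
  case Omega
  then obtain n where x: "x = VN n" by auto
  have "down Omega x \<subseteq> VN ` {..n}" using x by (auto simp: down_def)
  then show ?case by (rule finite_subset) simp
next
  case (DSum A B)
  from DSum.prems consider a where "a \<in> carrier A" "x = VL a" | b where "b \<in> carrier B" "x = VR b" by auto
  then show ?case
  proof cases
    case 1
    have "down (DSum A B) x \<subseteq> VL ` down A a" using 1 by (auto simp: down_def)
    then show ?thesis by (rule finite_subset) (simp add: DSum.IH(1)[OF 1(1)])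
  next
    case 2
    have "down (DSum A B) x \<subseteq> VR ` down B b" using 2 by (auto simp: down_def)
    then show ?thesis by (rule finite_subset) (simp add: DSum.IH(2)[OF 2(1)])
  qed
next
  case (Prod A B)
  from Prod.prems obtain a b where ab: "x = VP a b" "a \<in> carrier A" "b \<in> carrier B" by auto
  have "down (Prod A B) x \<subseteq> (\<lambda>(p,q). VP p q) ` (down A a \<times> down B b)"
  proof
    fix y assume y: "y \<in> down (Prod A B) x"
    then obtain p q where pq: "y = VP p q" "p \<in> carrier A" "q \<in> carrier B" by (auto simp: down_def)
    then have "leq A p a" "leq B q b" using y ab by (auto simp: down_def)
    then show "y \<in> (\<lambda>(p,q). VP p q) ` (down A a \<times> down B b)" using pq by (force simp: down_def)
  qed
  then show ?case by (rule finite_subset) (simp add: Prod.IH(1)[OF ab(2)] Prod.IH(2)[OF ab(3)])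
next
  case (Words A)
  from Words.prems obtain xs where xs: "x = VW xs" "set xs \<subseteq> carrier A" by auto
  define D where "D = (\<Union>a\<in>set xs. down A a)"
  have fD: "finite D" unfolding D_def using xs Words.IH by auto
  have "down (Words A) x \<subseteq> VW ` {ys. set ys \<subseteq> D \<and> length ys \<le> length xs}"
  proof
    fix y assume "y \<in> down (Words A) x"
    then obtain ys where y: "y = VW ys" "set ys \<subseteq> carrier A" "list_emb (leq A) ys xs"
      using xs by (auto simp: down_def)
    have "set ys \<subseteq> D"
    proof
      fix c assume c: "c \<in> set ys"
      obtain d where "d \<in> set xs" "leq A c d" using list_emb_set[OF y(3) c] by blast
      then show "c \<in> D" using c y(2) by (auto simp: D_def down_def)
    qed
    then show "y \<in> VW ` {ys. set ys \<subseteq> D \<and> length ys \<le> length xs}"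
      using y list_emb_length by blast
  qed
  then show ?case by (rule finite_subset) (simp add: finite_lists_length_le fD)
next
  case (MSets A)
  from MSets.prems obtain m where m: "x = VM m" "set_mset m \<subseteq> carrier A" by auto
  define D where "D = (\<Union>a\<in>set_mset m. down A a)"
  have fD: "finite D" unfolding D_def using m MSets.IH by auto
  have "down (MSets A) x \<subseteq> (\<lambda>xs. VM (mset xs)) ` {ys. set ys \<subseteq> D \<and> length ys \<le> size m}"
  proof
    fix y assume "y \<in> down (MSets A) x"
    then obtain m' xs ys where y: "y = VM m'" "set_mset m' \<subseteq> carrier A" "mset xs = m'"
      "mset ys \<subseteq># m" "list_all2 (leq A) xs ys"
      using m by (auto simp: down_def)
    have len: "length xs = length ys" using y(5) by (rule list_all2_lengthD)
    have "set xs \<subseteq> D"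
    proof
      fix c assume c: "c \<in> set xs"
      then obtain i where i: "i < length xs" "c = xs ! i" by (auto simp: in_set_conv_nth)
      have "leq A c (ys ! i)" using list_all2_nthD[OF y(5) i(1)] i by simp
      moreover have "ys ! i \<in># m" using i len y(4) by (metis mset_subset_eqD nth_mem set_mset_mset)
      moreover have "c \<in> carrier A" using c y(2,3) by auto
      ultimately show "c \<in> D" by (auto simp: D_def down_def)
    qed
    moreover have "length xs \<le> size m" using len y(4) by (metis size_mset size_mset_mono)
    ultimately show "y \<in> (\<lambda>xs. VM (mset xs)) ` {ys. set ys \<subseteq> D \<and> length ys \<le> size m}"
      using y by blast
  qed
  then show ?case by (rule finite_subset) (simp add: finite_lists_length_le fD)
next
  case (Pfin A)
  from Pfin.prems obtain s where s: "x = VF s" "fset s \<subseteq> carrier A" by auto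
  define D where "D = (\<Union>a\<in>fset s. down A a)"
  have fD: "finite D" unfolding D_def using s Pfin.IH by auto
  have fin: "finite {t. fset t \<subseteq> D}"
  proof (rule finite_imageD)
    show "finite (fset ` {t. fset t \<subseteq> D})" by (rule finite_subset[of _ "Pow D"]) (auto simp: fD)
    show "inj_on fset {t. fset t \<subseteq> D}" by (meson fset_inject inj_onI)
  qed
  have "down (Pfin A) x \<subseteq> VF ` {t. fset t \<subseteq> D}"
  proof
    fix y assume "y \<in> down (Pfin A) x"
    then obtain t where y: "y = VF t" "fset t \<subseteq> carrier A" "\<forall>a. a |\<in>| t \<longrightarrow> (\<exists>b. b |\<in>| s \<and> leq A a b)"
      using s by (auto simp: down_def)
    have "fset t \<subseteq> D" using y(2,3) by (auto simp: D_def down_def)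
    then show "y \<in> VF ` {t. fset t \<subseteq> D}" using y by blast
  qed
  then show ?case by (rule finite_subset) (simp add: fin)
qed


lemma less_card:
  assumes "x \<in> carrier A" "y \<in> carrier A" "less A y x"
  shows "card (down A y) < card (down A x)"
proof (rule psubset_card_mono)
  show "finite (down A x)" using assms(1) by (rule finite_down)
  have "down A y \<subseteq> down A x" using assms leq_trans[of _ A y x] by (auto simp: down_def less_def)
  moreover have "x \<in> down A x" using assms(1) leq_refl by (auto simp: down_def)
  moreover have "x \<notin> down A y" using assms(3) by (auto simp: down_def less_def)
  ultimately show "down A y \<subset> down A x" by blast
qed

lemma dec_snoc_less:
  assumes "dec A (s @ [b])" "s \<noteq> []"
  shows "less A b (last s) \<and> b \<in> carrier A"
proof -
  have "less A ((s@[b]) ! Suc (length s - 1)) ((s@[b]) ! (length s - 1))"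
  proof -
    have "Suc (length s - 1) < length (s@[b])" using assms(2) by simp
    then show ?thesis using assms(1) unfolding dec_def by blast
  qed
  moreover have "(s@[b]) ! Suc (length s - 1) = b" using assms(2) by (simp add: nth_append)
  moreover have "(s@[b]) ! (length s - 1) = last s" using assms(2) by (simp add: nth_append last_conv_nth)
  moreover have "b \<in> carrier A" using assms(1) by (auto simp: dec_def)
  ultimately show ?thesis by simp
qed

lemma dec_snoc:
  assumes "dec A s" "s \<noteq> []" "b \<in> carrier A" "less A b (last s)"
  shows "dec A (s @ [b])"
  unfolding dec_def
proof (intro conjI allI impI)
  show "set (s @ [b]) \<subseteq> carrier A" using assms by (auto simp: dec_def)
  fix i assume i: "Suc i < length (s @ [b])"
  show "less A ((s @ [b]) ! Suc i) ((s @ [b]) ! i)"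
  proof (cases "Suc i < length s")
    case True
    then show ?thesis using assms(1) by (simp add: nth_append dec_def)
  next
    case False
    then have "Suc i = length s" using i by simp
    then have "i = length s - 1" by simp
    then show ?thesis using assms(2,4) \<open>Suc i = length s\<close> by (simp add: nth_append last_conv_nth)
  qed
qed

lemma rank_upper: "dec A s \<Longrightarrow> s \<noteq> [] \<Longrightarrow> rank_le A s (card (down A (last s)))"
proof (induction "card (down A (last s))" arbitrary: s rule: less_induct)
  case less
  show ?case
  proof (rule rank_le.intros)
    fix t assume "child A s t"
    then obtain b where t: "t = s @ [b]" "dec A t" by (auto simp: child_def)
    then have bl: "less A b (last s)" "b \<in> carrier A" using dec_snoc_less less.prems(2) by blast+
    have "last s \<in> carrier A" using less.prems by (auto simp: dec_def)
    then have c: "card (down A b) < card (down A (last s))" using less_card bl by blast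
    have lt: "last t = b" using t(1) by simp
    have "rank_le A t (card (down A (last t)))" by (rule less.hyps) (use c lt t(1,2) in auto)
    then show "\<exists>m<card (down A (last s)). rank_le A t m" using c lt by auto
  qed
qed

lemma rank_lower:
  assumes e: "\<forall>k. e k \<in> carrier A" "\<forall>k. less A (e k) (e (Suc k))"
  shows "dec A s \<Longrightarrow> s \<noteq> [] \<Longrightarrow> last s = e m \<Longrightarrow> k < m \<Longrightarrow> \<not> rank_le A s k"
proof (induction m arbitrary: s k)
  case 0 then show ?case by simp
next
  case (Suc m)
  show ?case
  proof
    assume "rank_le A s k"
    then have h: "\<And>t. child A s t \<Longrightarrow> \<exists>m'<k. rank_le A t m'" by (rule rank_le.cases) simp
    have "dec A (s @ [e m])" using dec_snoc[OF Suc.prems(1,2)] e Suc.prems(3) by simp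
    then have "child A s (s @ [e m])" by (auto simp: child_def)
    then obtain m' where m': "m' < k" "rank_le A (s @ [e m]) m'" using h by blast
    have "\<not> rank_le A (s @ [e m]) m'"
      using Suc.IH[of "s @ [e m]" m'] \<open>dec A (s @ [e m])\<close> m'(1) Suc.prems(4) by simp
    then show False using m'(2) by simp
  qed
qed

theorem mainTheorem20:
  fixes A :: wexp
  shows "height_is_omega A"
  unfolding height_is_omega_def
proof (intro conjI allI impI)
  fix t assume "child A [] t"
  then have "dec A t" "t \<noteq> []" by (auto simp: child_def)
  then show "\<exists>n. rank_le A t n" using rank_upper by blast
next
  fix n
  obtain e where e: "\<forall>k. e k \<in> carrier A" "\<forall>k. less A (e k) (e (Suc k))" using chain_ex by blast
  have d: "dec A [e (Suc n)]" using e by (simp add: dec_def)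
  then have "child A [] [e (Suc n)]" by (simp add: child_def)
  moreover have "\<not> rank_le A [e (Suc n)] n" using rank_lower[OF e d] by simp
  ultimately show "\<exists>t. child A [] t \<and> \<not> rank_le A t n" by blast
qed

end
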